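(* Let $w_0\ge w_1\ge\cdots\ge w_{n-1}$ be positive real numbers with sum $W$. Then $$\sum_{i=0}^{n-1} w_i\Bigl(\tfrac12+\lfloor \log_2(i+1)\rfloor\Bigr)\ \ge\ \sum_{i=0}^{n-1}\tfrac12\, w_i\log_2(W/w_i).$$ *)

theory Defs
  imports Complex_Main
begin

end

theory Submission
  imports Defs
begin

definition kk :: "nat \<Rightarrow> int" where "kk i = \<lfloor>log 2 (real (i + 1))\<rfloor>"
definition qq :: "nat \<Rightarrow> real" where "qq i = 2 powr (-(1 + 2 * real_of_int (kk i)))"

lemma kk_block: assumes "2^m - 1 \<le> i" "i < 2^(Suc m) - 1" shows "kk i = int m"
proof -
  have "(1::nat) \<le> 2^m" "(1::nat) \<le> 2^(Suc m)" by simp_all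
  then have "2^m \<le> i + 1" "i + 1 < (2::nat)^(Suc m)" using assms by linarith+
  then have "floor (log (real (2::nat)) (real (i+1))) = int m"
    by (intro floor_log_nat_eq_if) auto
  then show ?thesis by (simp add: kk_def)
qed

lemma kraft_pow: "(\<Sum>i<2^m - 1. qq i) = 1 - 2 powr (- real m)"
proof (induction m)
  case 0
  then show ?case by simp
next
  case (Suc m)
  have le: "(2::nat)^m - 1 \<le> 2^(Suc m) - 1" by simp
  have blk: "(\<Sum>i\<in>{(2::nat)^m - 1..<2^(Suc m) - 1}. qq i) = (\<Sum>i\<in>{(2::nat)^m - 1..<2^(Suc m) - 1}. 2 powr (-(1 + 2 * real m)))"
    by (intro sum.cong refl) (auto simp: qq_def kk_block)
  have c: "card {(2::nat)^m - 1..<2^(Suc m) - 1} = 2^m" by simp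
  have "(\<Sum>i<2^Suc m - 1. qq i) = (\<Sum>i\<in>{0..<2^m - 1}. qq i) + (\<Sum>i\<in>{2^m - 1..<2^(Suc m) - 1}. qq i)"
    using sum.atLeastLessThan_concat[of 0 "2^m - 1" "2^(Suc m) - 1" qq] le
    by (simp add: atLeast0LessThan)
  also have "\<dots> = 1 - 2 powr (- real m) + 2^m * 2 powr (-(1 + 2 * real m))"
  proof -
    have s1: "(\<Sum>i\<in>{(2::nat)^m - 1..<2^(Suc m) - 1}. qq i) = 2^m * 2 powr (-(1 + 2 * real m))"
      unfolding blk sum_constant c by simp
    show ?thesis by (simp only: atLeast0LessThan Suc.IH s1)
  qed
  also have "2^m * 2 powr (-(1 + 2 * real m)) = (2::real) powr (real m + (-(1 + 2 * real m)))"
  proof -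
    have "(2::real)^m = 2 powr real m" by (simp add: powr_realpow)
    then show ?thesis by (simp add: powr_add[symmetric])
  qed
  also have "real m + (-(1 + 2 * real m)) = - real m - 1" by simp
  also have "1 - 2 powr (- real m) + 2 powr (- real m - 1) = 1 - 2 powr (- real (Suc m))"
  proof -
    have "2 powr (- real m) = 2 * 2 powr (- real m - 1)"
      by (simp add: powr_diff)
    moreover have "- real (Suc m) = - real m - 1" by simp
    ultimately show ?thesis by (simp only:)
  qed
  finally show ?case .
qed

lemma kraft: "(\<Sum>i<n. qq i) \<le> 1"
proof -
  have "n \<le> 2^n - 1"
    using less_exp[of n] by linarith
  then have "(\<Sum>i<n. qq i) \<le> (\<Sum>i<2^n - 1. qq i)"
    by (intro sum_mono2) (auto simp: qq_def)
  also have "\<dots> = 1 - 2 powr (- real n)" by (rule kraft_pow)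
  also have "\<dots> \<le> 1" by simp
  finally show ?thesis .
qed

theorem lemma6:
  fixes w :: "nat \<Rightarrow> real" and n :: nat and W :: real
  assumes pos: "\<And>i. i < n \<Longrightarrow> w i > 0"
    and mono: "\<And>i j. i \<le> j \<Longrightarrow> j < n \<Longrightarrow> w j \<le> w i"
    and W_def: "W = (\<Sum>i<n. w i)"
  shows "(\<Sum>i<n. w i * (1/2 + real_of_int \<lfloor>log 2 (real (i + 1))\<rfloor>))
           \<ge> (\<Sum>i<n. 1/2 * w i * log 2 (W / w i))"
proof (cases "n = 0")
  case True then show ?thesis by simp
next
  case False
  then have Wpos: "W > 0" unfolding W_def using pos by (intro sum_pos) auto
  have qpos: "qq i > 0" for i by (simp add: qq_def)
  have step: "w i * log 2 (W / w i) \<le> (W * qq i - w i) / ln 2 + w i * (1 + 2 * real_of_int (kk i))"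
    if "i < n" for i
  proof -
    have wi: "w i > 0" using pos that by simp
    have x: "W * qq i / w i > 0" using wi Wpos qpos by simp
    have "log 2 (W / w i) = log 2 (W * qq i / w i) - log 2 (qq i)"
      using wi Wpos qpos[of i] by (simp add: log_divide log_mult)
    also have "log 2 (qq i) = -(1 + 2 * real_of_int (kk i))" by (simp add: qq_def)
    finally have e: "log 2 (W / w i) = log 2 (W * qq i / w i) + (1 + 2 * real_of_int (kk i))" by simp
    have "log 2 (W * qq i / w i) \<le> (W * qq i / w i - 1) / ln 2"
      using ln_le_minus_one[OF x] by (simp add: log_def divide_right_mono)
    then have "w i * log 2 (W * qq i / w i) \<le> w i * ((W * qq i / w i - 1) / ln 2)"
      by (rule mult_left_mono) (use wi in auto)
    also have "\<dots> = (W * qq i - w i) / ln 2" using wi by (simp add: field_simps)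
    finally show ?thesis unfolding e by (simp add: distrib_left)
  qed
  have "(\<Sum>i<n. w i * log 2 (W / w i)) \<le> (\<Sum>i<n. (W * qq i - w i) / ln 2 + w i * (1 + 2 * real_of_int (kk i)))"
    by (intro sum_mono step) auto
  also have "\<dots> = (W * (\<Sum>i<n. qq i) - W) / ln 2 + (\<Sum>i<n. w i * (1 + 2 * real_of_int (kk i)))"
    by (simp add: sum.distrib sum_divide_distrib[symmetric] sum_subtractf sum_distrib_left W_def)
  also have "\<dots> \<le> (\<Sum>i<n. w i * (1 + 2 * real_of_int (kk i)))"
  proof -
    have "W * (\<Sum>i<n. qq i) \<le> W * 1" using kraft Wpos by (intro mult_left_mono) auto
    then show ?thesis by (simp add: divide_nonpos_pos)
  qed
  finally have main: "(\<Sum>i<n. w i * log 2 (W / w i)) \<le> (\<Sum>i<n. w i * (1 + 2 * real_of_int (kk i)))" .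
  have "(\<Sum>i<n. 1/2 * w i * log 2 (W / w i)) = 1/2 * (\<Sum>i<n. w i * log 2 (W / w i))"
    by (simp add: sum_distrib_left mult.assoc)
  also have "\<dots> \<le> 1/2 * (\<Sum>i<n. w i * (1 + 2 * real_of_int (kk i)))" using main by simp
  also have "\<dots> = (\<Sum>i<n. w i * (1/2 + real_of_int \<lfloor>log 2 (real (i + 1))\<rfloor>))"
    by (simp add: sum_distrib_left kk_def algebra_simps)
  finally show ?thesis by simp
qed

end
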